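(* Let $P=\eta\otimes\pi$ be a distribution of the longitudinal data and $\hat P=\hat\eta\otimes\hat\pi$ an estimate of it, where $\eta=(\eta_1,\ldots,\eta_{\tau+1})$ are the non-treatment conditional distributions and $\pi=(\pi_1,\ldots,\pi_\tau)$ the treatment mechanisms (see context), with $g_t\ll\hat\pi_t$ for all $t$. Define the second-order remainder $R_2(\hat P,P)$ by $$\psi(\hat P)-\psi(P)=-P D^\star(\hat P)+R_2(\hat P,P).$$ Then $$R_2(\hat P,P)=\sum_{t=1}^\tau\int_{\mathcal{O}_{1:t}}\frac{dg_{1:t}}{d\hat\pi_{1:t}}\Big[\int V_{t+1}(\hat\eta)\,d\eta_{t+1}-Q_t(\hat\eta)\Big]\,d(\pi_{1:t}-\hat\pi_{1:t})\,d\eta_{1:t}.$$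
   Context: Observed data $O=(W,L_1,A_1,Y_1,\ldots,L_\tau,A_\tau,Y_\tau)$, $Y=Y_\tau$, $pa(A_t)=(W,L_{1:t},A_{1:t-1},Y_{1:t-1})$, $pa(Y_t)=(pa(A_t),A_t)$. The joint law factorizes as $P=\eta\otimes\pi$, where $\eta_1$ is the law of $(W,L_1)$, $\eta_t$ ($t=2,\ldots,\tau+1$) is the conditional law of $(Y_{t-1},L_t)$ given $pa(Y_{t-1})$ (with $\eta_{\tau+1}$ the law of $Y_\tau$ given $pa(Y_\tau)$), and $\pi_t$ is the conditional law of $A_t$ given $pa(A_t)$. $g=(g_t)$ is a user-specified treatment policy (conditional laws of $A_t$ given $pa(A_t)$). Products like $\pi_{1:t}$, $\eta_{1:t}$, $g_{1:t}$ denote the iterated (disintegrated) measures along the time ordering, and $\mathcal{O}_{1:t}$ the space of histories through time $t$. For a given $\eta$: $Q_t(\eta)=\int Y\,d(g_{t+1:\tau}\otimes\eta_{t+1:\tau+1})$ (the $g$-computation value $\mathbb{E}_g[Y\mid pa(Y_t)]$), $V_t(\eta)=\int Y\,d(g_{t:\tau}\otimes\eta_{t+1:\tau+1})=\mathbb{E}_g[Y\mid pa(A_t)]$ for $t\le\tau$, and $V_{\tau+1}=Y_\tau$. The target functional is $\psi(P)=\mathbb{E}_gY=\int V_1(\eta)\,d\eta_1$. The efficient influence function is $D^\star(P)=(V_1-\psi(P))+\sum_{t=1}^\tau I_t(V_{t+1}-Q_t)$ with $I_t=\prod_{s=1}^t dg_s/d\pi_s$, all quantities evaluated at $P$. $Pf=\int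 f\,dP$. *)

theory Defs
  imports "HOL-Probability.Probability"
begin

text \<open>
Encoding of the longitudinal data (0-based positions):
the observation is a function w :: nat => 'w, of which only the positions
0 .. 2*tau are relevant, position i taking values in the measurable space M i.
Position 2*s (s = 0..tau) carries the non-treatment block X_{s+1}
(X_1 = (W,L_1), X_{s+1} = (Y_s, L_{s+1}), X_{tau+1} = Y_tau),
position 2*s+1 (s = 0..tau-1) carries the treatment A_{s+1}.
A history of length n is an element of PiM {..<n} M (first n positions).
A kernel at position i maps histories of length i to laws on M i.
\<close>

definition interleave :: "(nat \<Rightarrow> 'k) \<Rightarrow> (nat \<Rightarrow> 'k) \<Rightarrow> nat \<Rightarrow> 'k" where
  "interleave E A i = (if even i then E (i div 2) else A (i div 2))"

fun law :: "(nat \<Rightarrow> 'w measure) \<Rightarrow> (nat \<Rightarrow> (nat \<Rightarrow> 'w) \<Rightarrow> 'w measure) \<Rightarrow> nat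
            \<Rightarrow> (nat \<Rightarrow> 'w) measure" where
  "law M K 0 = return (PiM {} M) (\<lambda>_. undefined)"
| "law M K (Suc n) =
     bind (law M K n) (\<lambda>h. distr (K n h) (PiM {..<Suc n} M) (\<lambda>x. h(n := x)))"

text \<open>cont K Y N m h: integrate out the last m of the N positions, starting
from the history h restricted to its first N - m positions, and evaluate Y at
position N - 1.\<close>
fun cont :: "(nat \<Rightarrow> (nat \<Rightarrow> 'w) \<Rightarrow> 'w measure) \<Rightarrow> ('w \<Rightarrow> real) \<Rightarrow> nat \<Rightarrow> nat
             \<Rightarrow> (nat \<Rightarrow> 'w) \<Rightarrow> real" where
  "cont K Y N 0 h = Y (h (N - 1))"
| "cont K Y N (Suc m) h =
     (\<integral>x. cont K Y N m ((restrict h {..<N - Suc m})(N - Suc m := x))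
        \<partial>(K (N - Suc m) (restrict h {..<N - Suc m})))"

text \<open>val K Y N n h = E_K[Y | first n positions = h] (g-computation value).\<close>
definition val :: "(nat \<Rightarrow> (nat \<Rightarrow> 'w) \<Rightarrow> 'w measure) \<Rightarrow> ('w \<Rightarrow> real) \<Rightarrow> nat \<Rightarrow> nat
             \<Rightarrow> (nat \<Rightarrow> 'w) \<Rightarrow> real" where
  "val K Y N n h = cont K Y N (N - n) h"

text \<open>Target functional psi = E_g Y, depending on the non-treatment kernels E.\<close>
definition psi :: "(nat \<Rightarrow> (nat \<Rightarrow> 'w) \<Rightarrow> 'w measure) \<Rightarrow> (nat \<Rightarrow> (nat \<Rightarrow> 'w) \<Rightarrow> 'w measure)
             \<Rightarrow> ('w \<Rightarrow> real) \<Rightarrow> nat \<Rightarrow> real" where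
  "psi E g Y \<tau> = val (interleave E g) Y (2 * \<tau> + 1) 0 (\<lambda>_. undefined)"

text \<open>Cumulative weight I_t = prod_{s=1}^t dg_s/dpi_s, where dens r (0-based)
is a version of dg_{r+1}/dpi_{r+1}, a function of histories of length 2r+2.\<close>
definition wt :: "(nat \<Rightarrow> (nat \<Rightarrow> 'w) \<Rightarrow> real) \<Rightarrow> nat \<Rightarrow> (nat \<Rightarrow> 'w) \<Rightarrow> real" where
  "wt dens t w = (\<Prod>r<t. dens r (restrict w {..<2 * r + 2}))"

definition EIF :: "(nat \<Rightarrow> (nat \<Rightarrow> 'w) \<Rightarrow> 'w measure) \<Rightarrow> (nat \<Rightarrow> (nat \<Rightarrow> 'w) \<Rightarrow> 'w measure)
             \<Rightarrow> (nat \<Rightarrow> (nat \<Rightarrow> 'w) \<Rightarrow> real) \<Rightarrow> ('w \<Rightarrow> real) \<Rightarrow> nat \<Rightarrow> (nat \<Rightarrow> 'w) \<Rightarrow> real" where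
  "EIF E g dens Y \<tau> w =
     (val (interleave E g) Y (2 * \<tau> + 1) 1 (restrict w {..<1}) - psi E g Y \<tau>)
     + (\<Sum>t\<in>{1..\<tau>}. wt dens t w *
          (val (interleave E g) Y (2 * \<tau> + 1) (2 * t + 1) (restrict w {..<2 * t + 1})
           - val (interleave E g) Y (2 * \<tau> + 1) (2 * t) (restrict w {..<2 * t})))"

end

theory Submission
  imports Defs
begin
definition kst :: "(nat \<Rightarrow> 'w measure) \<Rightarrow> nat \<Rightarrow> ((nat \<Rightarrow> 'w) \<Rightarrow> 'w measure) \<Rightarrow> (nat \<Rightarrow> 'w) \<Rightarrow> (nat \<Rightarrow> 'w) measure" where
  "kst M n \<kappa> h = distr (\<kappa> h) (PiM {..<Suc n} M) (\<lambda>x. h(n := x))"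

lemma law_Suc': "law M K (Suc n) = bind (law M K n) (kst M n (K n))"
  by (simp add: kst_def[abs_def])

declare law.simps(2)[simp del]

lemma upd_meas:
  assumes "h \<in> space (PiM {..<n} M)" "sets N = sets (M n)"
  shows "(\<lambda>x. h(n := x)) \<in> measurable N (PiM {..<Suc n} M)"
proof -
  have "(\<lambda>x. h(n := x)) \<in> measurable (M n) (PiM (insert n {..<n}) M)"
    using assms(1) by (intro measurable_component_update) auto
  then show ?thesis using assms(2) lessThan_Suc[of n]
    by (simp add: measurable_cong_sets[OF assms(2) refl])
qed

lemma kst_meas:
  assumes "\<kappa> \<in> measurable (PiM {..<n} M) (prob_algebra (M n))"
  shows "kst M n \<kappa> \<in> measurable (PiM {..<n} M) (prob_algebra (PiM {..<Suc n} M))"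
  unfolding kst_def
proof (rule measurable_distr_prob_space2[OF assms])
  have "(\<lambda>(f, y). f(n := y)) \<in> measurable (PiM {..<n} M \<Otimes>\<^sub>M M n) (PiM (insert n {..<n}) M)"
    by (rule measurable_add_dim)
  then show "(\<lambda>(x, y). x(n := y)) \<in> PiM {..<n} M \<Otimes>\<^sub>M M n \<rightarrow>\<^sub>M PiM {..<Suc n} M"
    using lessThan_Suc[of n] by simp
qed

lemma kernel_at:
  assumes "\<kappa> \<in> measurable (PiM {..<n} M) (prob_algebra (M n))" "h \<in> space (PiM {..<n} M)"
  shows "prob_space (\<kappa> h)" "sets (\<kappa> h) = sets (M n)" "space (\<kappa> h) = space (M n)"
proof -
  have a: "\<kappa> h \<in> space (prob_algebra (M n))" using measurable_space[OF assms] .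
  then show "prob_space (\<kappa> h)" "sets (\<kappa> h) = sets (M n)" by (auto simp: space_prob_algebra)
  then show "space (\<kappa> h) = space (M n)" by (intro sets_eq_imp_space_eq)
qed

definition validK :: "(nat \<Rightarrow> 'w measure) \<Rightarrow> (nat \<Rightarrow> (nat \<Rightarrow> 'w) \<Rightarrow> 'w measure) \<Rightarrow> nat \<Rightarrow> bool" where
  "validK M K n \<longleftrightarrow> (\<forall>i<n. K i \<in> measurable (PiM {..<i} M) (prob_algebra (M i)))"

lemma law_space:
  "validK M K n \<Longrightarrow> law M K n \<in> space (prob_algebra (PiM {..<n} M))"
proof (induction n)
  case 0
  have "(\<lambda>_. undefined) \<in> space (PiM {} M)" by simp
  then show ?case
    by (auto simp: space_prob_algebra intro!: prob_space_return)
next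
  case (Suc n)
  then have IH: "law M K n \<in> space (prob_algebra (PiM {..<n} M))" by (simp add: validK_def)
  have k: "kst M n (K n) \<in> measurable (PiM {..<n} M) (prob_algebra (PiM {..<Suc n} M))"
    using Suc.prems by (intro kst_meas) (simp add: validK_def)
  show ?case unfolding law_Suc'
    using prob_space_bind'[OF IH k] sets_bind'[OF IH k] by (simp add: space_prob_algebra)
qed

lemma law_props:
  assumes "validK M K n"
  shows "prob_space (law M K n)" "sets (law M K n) = sets (PiM {..<n} M)"
    "space (law M K n) = space (PiM {..<n} M)"
proof -
  have a: "law M K n \<in> space (prob_algebra (PiM {..<n} M))" using law_space[OF assms] .
  then show "prob_space (law M K n)" "sets (law M K n) = sets (PiM {..<n} M)" by (auto simp: space_prob_algebra)
  then show "space (law M K n) = space (PiM {..<n} M)" by (intro sets_eq_imp_space_eq)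
qed

lemma validK_mono: "validK M K n \<Longrightarrow> m \<le> n \<Longrightarrow> validK M K m"
  by (simp add: validK_def)

lemma nn_step:
  assumes L: "sets L = sets (PiM {..<n} M)"
    and \<kappa>: "\<kappa> \<in> measurable (PiM {..<n} M) (prob_algebra (M n))"
    and f: "f \<in> borel_measurable (PiM {..<Suc n} M)"
  shows "(\<integral>\<^sup>+w. f w \<partial>bind L (kst M n \<kappa>)) = (\<integral>\<^sup>+h. \<integral>\<^sup>+x. f (h(n := x)) \<partial>\<kappa> h \<partial>L)"
proof -
  have k: "kst M n \<kappa> \<in> measurable L (subprob_algebra (PiM {..<Suc n} M))"
    using measurable_prob_algebraD[OF kst_meas[OF \<kappa>]] by (simp add: measurable_cong_sets[OF L refl])
  have "(\<integral>\<^sup>+w. f w \<partial>bind L (kst M n \<kappa>)) = (\<integral>\<^sup>+h. \<integral>\<^sup>+w. f w \<partial>kst M n \<kappa> h \<partial>L)"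
    by (rule nn_integral_bind[OF f k])
  also have "\<dots> = (\<integral>\<^sup>+h. \<integral>\<^sup>+x. f (h(n := x)) \<partial>\<kappa> h \<partial>L)"
  proof (rule nn_integral_cong)
    fix h assume h: "h \<in> space L"
    then have h': "h \<in> space (PiM {..<n} M)" using sets_eq_imp_space_eq[OF L] by simp
    show "(\<integral>\<^sup>+w. f w \<partial>kst M n \<kappa> h) = (\<integral>\<^sup>+x. f (h(n := x)) \<partial>\<kappa> h)"
      unfolding kst_def
      by (rule nn_integral_distr[OF upd_meas[OF h' kernel_at(2)[OF \<kappa> h']]]) (simp add: f)
  qed
  finally show ?thesis .
qed

lemma int_step:
  fixes f :: "_ \<Rightarrow> real"
  assumes L: "sets L = sets (PiM {..<n} M)" and fin: "finite_measure L"
    and \<kappa>: "\<kappa> \<in> measurable (PiM {..<n} M) (prob_algebra (M n))"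
    and f: "f \<in> borel_measurable (PiM {..<Suc n} M)"
    and B: "\<And>w. w \<in> space (PiM {..<Suc n} M) \<Longrightarrow> \<bar>f w\<bar> \<le> B"
  shows "(\<integral>w. f w \<partial>bind L (kst M n \<kappa>)) = (\<integral>h. \<integral>x. f (h(n := x)) \<partial>\<kappa> h \<partial>L)"
proof -
  have k: "kst M n \<kappa> \<in> measurable L (subprob_algebra (PiM {..<Suc n} M))"
    using measurable_prob_algebraD[OF kst_meas[OF \<kappa>]] by (simp add: measurable_cong_sets[OF L refl])
  have ae: "AE x in L. emeasure (kst M n \<kappa> x) (space (kst M n \<kappa> x)) \<le> ennreal 1"
  proof (rule AE_I2)
    fix h assume h: "h \<in> space L"
    then have h': "h \<in> space (PiM {..<n} M)" using sets_eq_imp_space_eq[OF L] by simp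
    interpret prob_space "\<kappa> h" using kernel_at(1)[OF \<kappa> h'] .
    show "emeasure (kst M n \<kappa> h) (space (kst M n \<kappa> h)) \<le> ennreal 1"
      unfolding kst_def
      by (simp add: emeasure_distr upd_meas[OF h' kernel_at(2)[OF \<kappa> h']] emeasure_le_1)
  qed
  have "(\<integral>w. f w \<partial>bind L (kst M n \<kappa>)) = (\<integral>h. \<integral>w. f w \<partial>kst M n \<kappa> h \<partial>L)"
    by (rule integral_bind[OF f B k fin ae])
  also have "\<dots> = (\<integral>h. \<integral>x. f (h(n := x)) \<partial>\<kappa> h \<partial>L)"
  proof (rule Bochner_Integration.integral_cong[OF refl])
    fix h assume h: "h \<in> space L"
    then have h': "h \<in> space (PiM {..<n} M)" using sets_eq_imp_space_eq[OF L] by simp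
    show "(\<integral>w. f w \<partial>kst M n \<kappa> h) = (\<integral>x. f (h(n := x)) \<partial>\<kappa> h)"
      unfolding kst_def
      by (rule integral_distr[OF upd_meas[OF h' kernel_at(2)[OF \<kappa> h']]]) (simp add: f)
  qed
  finally show ?thesis .
qed

lemma int_bound:
  fixes f :: "_ \<Rightarrow> real"
  assumes "prob_space \<mu>" "f \<in> borel_measurable \<mu>" "\<And>x. x \<in> space \<mu> \<Longrightarrow> \<bar>f x\<bar> \<le> B"
  shows "integrable \<mu> f" "\<bar>\<integral>x. f x \<partial>\<mu>\<bar> \<le> B"
proof -
  interpret prob_space \<mu> by fact
  show i: "integrable \<mu> f"
    by (rule integrable_const_bound[where B=B]) (auto intro!: AE_I2 assms)
  have "\<bar>\<integral>x. f x \<partial>\<mu>\<bar> \<le> (\<integral>x. \<bar>f x\<bar> \<partial>\<mu>)" by (rule integral_abs_bound)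
  also have "\<dots> \<le> (\<integral>x. B \<partial>\<mu>)"
    by (rule integral_mono) (auto intro: i assms)
  also have "\<dots> = B" by (simp add: prob_space)
  finally show "\<bar>\<integral>x. f x \<partial>\<mu>\<bar> \<le> B" .
qed

lemma cont_Suc_eq:
  assumes "h \<in> space (PiM {..<N - Suc m} M)"
  shows "cont K Y N (Suc m) h = (\<integral>x. cont K Y N m (h(N - Suc m := x)) \<partial>K (N - Suc m) h)"
proof -
  have "restrict h {..<N - Suc m} = h" using assms by (simp add: space_PiM)
  then show ?thesis by simp
qed

lemma cont_props:
  assumes V: "validK M K N" and N: "0 < N" and Y: "Y \<in> borel_measurable (M (N - 1))"
    and YB: "\<And>y. y \<in> space (M (N - 1)) \<Longrightarrow> \<bar>Y y\<bar> \<le> B"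
  shows "m \<le> N \<Longrightarrow> cont K Y N m \<in> borel_measurable (PiM {..<N - m} M) \<and>
      (\<forall>h\<in>space (PiM {..<N - m} M). \<bar>cont K Y N m h\<bar> \<le> B)"
proof (induction m)
  case 0
  have c: "(\<lambda>h. h (N - 1)) \<in> measurable (PiM {..<N} M) (M (N - 1))"
    using N by (intro measurable_component_singleton) auto
  have "(\<lambda>h. Y (h (N - 1))) \<in> borel_measurable (PiM {..<N} M)"
    by (rule measurable_compose[OF c Y])
  moreover have "\<forall>h\<in>space (PiM {..<N} M). \<bar>Y (h (N - 1))\<bar> \<le> B"
    using measurable_space[OF c] YB by blast
  ultimately show ?case by simp
next
  case (Suc m)
  define i where "i = N - Suc m"
  have Ni: "N - m = Suc i" using Suc.prems by (simp add: i_def)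
  have IH: "cont K Y N m \<in> borel_measurable (PiM {..<Suc i} M)"
     "\<forall>h\<in>space (PiM {..<Suc i} M). \<bar>cont K Y N m h\<bar> \<le> B"
    using Suc by (simp_all add: Ni)
  have Ki: "K i \<in> measurable (PiM {..<i} M) (prob_algebra (M i))"
    using V Suc.prems by (simp add: validK_def i_def)
  have eq: "cont K Y N (Suc m) h = (\<integral>w. cont K Y N m w \<partial>kst M i (K i) h)"
    if h: "h \<in> space (PiM {..<i} M)" for h
  proof -
    have "cont K Y N (Suc m) h = (\<integral>x. cont K Y N m (h(i := x)) \<partial>K i h)"
      using cont_Suc_eq[of h N m M K Y] h by (simp add: i_def)
    also have "\<dots> = (\<integral>w. cont K Y N m w \<partial>kst M i (K i) h)"
      unfolding kst_def
      by (rule integral_distr[symmetric, OF upd_meas[OF h kernel_at(2)[OF Ki h]]]) (simp add: IH)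
    finally show ?thesis .
  qed
  have m1: "(\<lambda>h. \<integral>w. cont K Y N m w \<partial>kst M i (K i) h) \<in> borel_measurable (PiM {..<i} M)"
    by (rule measurable_compose[OF measurable_prob_algebraD[OF kst_meas[OF Ki]]
          integral_measurable_subprob_algebra[OF IH(1)]])
  have "cont K Y N (Suc m) \<in> borel_measurable (PiM {..<i} M)"
    using m1 by (subst measurable_cong[OF eq]) auto
  moreover have "\<bar>cont K Y N (Suc m) h\<bar> \<le> B" if h: "h \<in> space (PiM {..<i} M)" for h
  proof -
    have "cont K Y N (Suc m) h = (\<integral>x. cont K Y N m (h(i := x)) \<partial>K i h)"
      using cont_Suc_eq[of h N m M K Y] h by (simp add: i_def)
    also have "\<bar>\<dots>\<bar> \<le> B"
    proof (rule int_bound(2)[OF kernel_at(1)[OF Ki h]])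
      show "(\<lambda>x. cont K Y N m (h(i := x))) \<in> borel_measurable (K i h)"
        by (rule measurable_compose[OF upd_meas[OF h kernel_at(2)[OF Ki h]] IH(1)])
      fix x assume "x \<in> space (K i h)"
      then have "h(i := x) \<in> space (PiM {..<Suc i} M)"
        using measurable_space[OF upd_meas[OF h kernel_at(2)[OF Ki h]]] by blast
      then show "\<bar>cont K Y N m (h(i := x))\<bar> \<le> B" using IH(2) by blast
    qed
    finally show ?thesis .
  qed
  ultimately show ?case by (simp add: i_def Ni del: cont.simps)
qed

lemma val_props:
  assumes V: "validK M K N" and N: "0 < N" and Y: "Y \<in> borel_measurable (M (N - 1))"
    and YB: "\<And>y. y \<in> space (M (N - 1)) \<Longrightarrow> \<bar>Y y\<bar> \<le> B" and n: "n \<le> N"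
  shows "val K Y N n \<in> borel_measurable (PiM {..<n} M)"
    "\<And>h. h \<in> space (PiM {..<n} M) \<Longrightarrow> \<bar>val K Y N n h\<bar> \<le> B"
proof -
  have "N - (N - n) = n" using n by simp
  then show "val K Y N n \<in> borel_measurable (PiM {..<n} M)"
    "\<And>h. h \<in> space (PiM {..<n} M) \<Longrightarrow> \<bar>val K Y N n h\<bar> \<le> B"
    using cont_props[OF V N Y YB, of "N - n"] unfolding val_def[abs_def] by (auto simp del: cont.simps)
qed

lemma val_unfold:
  assumes "n < N" "h \<in> space (PiM {..<n} M)"
  shows "val K Y N n h = (\<integral>x. val K Y N (Suc n) (h(n := x)) \<partial>K n h)"
proof -
  have a: "N - n = Suc (N - Suc n)" and b: "N - Suc (N - Suc n) = n" using assms by auto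
  show ?thesis unfolding val_def a using cont_Suc_eq[of h N "N - Suc n" M K Y] assms(2) b by simp
qed

lemma emeasure_distr_nn:
  assumes r: "r \<in> measurable \<mu> R" and A: "A \<in> sets R"
  shows "emeasure (distr \<mu> R r) A = (\<integral>\<^sup>+w. indicator A (r w) \<partial>\<mu>)"
proof -
  have "emeasure (distr \<mu> R r) A = (\<integral>\<^sup>+x. indicator A x \<partial>distr \<mu> R r)"
    using A by (simp add: nn_integral_indicator)
  also have "\<dots> = (\<integral>\<^sup>+w. indicator A (r w) \<partial>\<mu>)"
    by (rule nn_integral_distr[OF r]) (simp add: borel_measurable_indicator[OF A])
  finally show ?thesis .
qed

lemma law_marg:
  assumes "validK M K n" "k \<le> n"
  shows "distr (law M K n) (PiM {..<k} M) (\<lambda>w. restrict w {..<k}) = law M K k"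
  using assms
proof (induction n)
  case 0
  then have k: "k = 0" by simp
  have "(\<lambda>w. restrict w {}) \<in> measurable (PiM {} M) (PiM {} M)"
    by (rule measurable_restrict_subset) simp
  moreover have "restrict (\<lambda>_. undefined) {} = (\<lambda>_. undefined)" by (simp add: restrict_def)
  ultimately show ?case using k by (simp add: distr_return)
next
  case (Suc n)
  have V: "validK M K n" using Suc.prems validK_mono by fastforce
  note LS = law_props[OF Suc.prems(1)]
  note L = law_props[OF V]
  show ?case
  proof (cases "k = Suc n")
    case True
    have "distr (law M K (Suc n)) (PiM {..<k} M) (\<lambda>w. restrict w {..<k})
        = distr (law M K (Suc n)) (PiM {..<k} M) (\<lambda>w. w)"
      by (rule distr_cong[OF refl refl]) (simp add: LS True space_PiM)
    also have "\<dots> = law M K k" using True LS by (simp add: distr_id2)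
    finally show ?thesis .
  next
    case False
    then have kn: "k \<le> n" using Suc.prems by simp
    have IH: "distr (law M K n) (PiM {..<k} M) (\<lambda>w. restrict w {..<k}) = law M K k"
      using Suc.IH[OF V kn] .
    have Kn: "K n \<in> measurable (PiM {..<n} M) (prob_algebra (M n))"
      using Suc.prems by (simp add: validK_def)
    have r1: "(\<lambda>w. restrict w {..<k}) \<in> measurable (PiM {..<Suc n} M) (PiM {..<k} M)"
      using kn by (intro measurable_restrict_subset) auto
    have r0: "(\<lambda>w. restrict w {..<k}) \<in> measurable (PiM {..<n} M) (PiM {..<k} M)"
      using kn by (intro measurable_restrict_subset) auto
    show ?thesis
    proof (rule measure_eqI)
      show "sets (distr (law M K (Suc n)) (PiM {..<k} M) (\<lambda>w. restrict w {..<k})) = sets (law M K k)"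
        using law_props(2)[OF validK_mono[OF Suc.prems(1)]] kn by simp
    next
      fix A assume "A \<in> sets (distr (law M K (Suc n)) (PiM {..<k} M) (\<lambda>w. restrict w {..<k}))"
      then have A: "A \<in> sets (PiM {..<k} M)" by simp
      have ind: "(\<lambda>w. indicator A (restrict w {..<k}) :: ennreal) \<in> borel_measurable (PiM {..<Suc n} M)"
        by (rule measurable_compose[OF r1]) (rule borel_measurable_indicator[OF A])
      have "emeasure (distr (law M K (Suc n)) (PiM {..<k} M) (\<lambda>w. restrict w {..<k})) A
          = (\<integral>\<^sup>+w. indicator A (restrict w {..<k}) \<partial>law M K (Suc n))"
        by (rule emeasure_distr_nn[OF _ A]) (use r1 measurable_cong_sets[OF LS(2) refl, of "PiM {..<k} M"] in simp)
      also have "\<dots> = (\<integral>\<^sup>+h. \<integral>\<^sup>+x. indicator A (restrict (h(n := x)) {..<k}) \<partial>K n h \<partial>law M K n)"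
        unfolding law_Suc' by (rule nn_step[OF L(2) Kn ind])
      also have "\<dots> = (\<integral>\<^sup>+h. indicator A (restrict h {..<k}) \<partial>law M K n)"
      proof (rule nn_integral_cong)
        fix h assume h: "h \<in> space (law M K n)"
        then have h': "h \<in> space (PiM {..<n} M)" using L by simp
        interpret prob_space "K n h" using kernel_at(1)[OF Kn h'] .
        have "\<And>x. restrict (h(n := x)) {..<k} = restrict h {..<k}" using kn
          by (auto simp: restrict_def fun_eq_iff)
        then show "(\<integral>\<^sup>+x. indicator A (restrict (h(n := x)) {..<k}) \<partial>K n h) = indicator A (restrict h {..<k})"
          by (simp add: emeasure_space_1)
      qed
      also have "\<dots> = emeasure (distr (law M K n) (PiM {..<k} M) (\<lambda>w. restrict w {..<k})) A"
        by (rule emeasure_distr_nn[symmetric, OF _ A]) (use r0 measurable_cong_sets[OF L(2) refl, of "PiM {..<k} M"] in simp)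
      finally show "emeasure (distr (law M K (Suc n)) (PiM {..<k} M) (\<lambda>w. restrict w {..<k})) A = emeasure (law M K k) A"
        using IH by simp
    qed
  qed
qed

lemma DB:
  fixes \<rho> \<rho>' :: "_ \<Rightarrow> real"
  assumes L: "L \<in> space (prob_algebra (PiM {..<n} M))"
    and \<kappa>: "\<kappa> \<in> measurable (PiM {..<n} M) (prob_algebra (M n))"
    and \<kappa>': "\<kappa>' \<in> measurable (PiM {..<n} M) (prob_algebra (M n))"
    and \<rho>: "\<rho> \<in> borel_measurable (PiM {..<n} M)"
    and \<rho>0: "\<And>h. h \<in> space (PiM {..<n} M) \<Longrightarrow> 0 \<le> \<rho> h"
    and \<rho>': "\<rho>' \<in> borel_measurable (PiM {..<Suc n} M)"
    and \<rho>'0: "\<And>w. w \<in> space (PiM {..<Suc n} M) \<Longrightarrow> 0 \<le> \<rho>' w"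
    and eq: "\<And>h. h \<in> space (PiM {..<n} M) \<Longrightarrow> \<kappa>' h = density (\<kappa> h) (\<lambda>x. ennreal (\<rho>' (h(n := x))))"
  shows "bind (density L (\<lambda>h. ennreal (\<rho> h))) (kst M n \<kappa>')
       = density (bind L (kst M n \<kappa>)) (\<lambda>w. ennreal (\<rho> (restrict w {..<n}) * \<rho>' w))"
proof -
  have sL: "sets L = sets (PiM {..<n} M)" and pL: "prob_space L" using L by (auto simp: space_prob_algebra)
  have spL: "space L = space (PiM {..<n} M)" using sets_eq_imp_space_eq[OF sL] .
  have ne: "space L \<noteq> {}" using prob_space.not_empty[OF pL] .
  have k: "kst M n \<kappa> \<in> measurable L (subprob_algebra (PiM {..<Suc n} M))"
    using measurable_prob_algebraD[OF kst_meas[OF \<kappa>]] by (simp add: measurable_cong_sets[OF sL refl])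
  have k': "kst M n \<kappa>' \<in> measurable L (subprob_algebra (PiM {..<Suc n} M))"
    using measurable_prob_algebraD[OF kst_meas[OF \<kappa>']] by (simp add: measurable_cong_sets[OF sL refl])
  have k'd: "kst M n \<kappa>' \<in> measurable (density L (\<lambda>h. ennreal (\<rho> h))) (subprob_algebra (PiM {..<Suc n} M))"
    using k' by (simp add: measurable_cong_sets[OF sets_density refl])
  have sB: "sets (bind L (kst M n \<kappa>)) = sets (PiM {..<Suc n} M)"
    by (rule sets_bind[OF _ ne]) (use k in \<open>auto dest: subprob_measurableD(2)\<close>)
  have sB': "sets (bind (density L (\<lambda>h. ennreal (\<rho> h))) (kst M n \<kappa>')) = sets (PiM {..<Suc n} M)"
    by (rule sets_bind[OF _]) (use k'd ne in \<open>auto dest: subprob_measurableD(2)\<close>)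
  have rr: "(\<lambda>w. restrict w {..<n}) \<in> measurable (PiM {..<Suc n} M) (PiM {..<n} M)"
    by (intro measurable_restrict_subset) auto
  have F: "(\<lambda>w. \<rho> (restrict w {..<n}) * \<rho>' w) \<in> borel_measurable (PiM {..<Suc n} M)"
    using measurable_compose[OF rr \<rho>] \<rho>' by measurable
  show ?thesis
  proof (rule measure_eqI)
    show "sets (bind (density L (\<lambda>h. ennreal (\<rho> h))) (kst M n \<kappa>')) =
        sets (density (bind L (kst M n \<kappa>)) (\<lambda>w. ennreal (\<rho> (restrict w {..<n}) * \<rho>' w)))"
      using sB sB' by simp
  next
    fix A assume "A \<in> sets (bind (density L (\<lambda>h. ennreal (\<rho> h))) (kst M n \<kappa>'))"
    then have A: "A \<in> sets (PiM {..<Suc n} M)" using sB' by simp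
    have "emeasure (bind (density L (\<lambda>h. ennreal (\<rho> h))) (kst M n \<kappa>')) A
        = (\<integral>\<^sup>+h. emeasure (kst M n \<kappa>' h) A \<partial>density L (\<lambda>h. ennreal (\<rho> h)))"
      by (rule emeasure_bind[OF _ k'd A]) (use ne in simp)
    also have "\<dots> = (\<integral>\<^sup>+h. ennreal (\<rho> h) * emeasure (kst M n \<kappa>' h) A \<partial>L)"
      by (rule nn_integral_density)
        (use \<rho> measurable_emeasure_subprob_algebra[OF A] k' sL in \<open>auto simp: measurable_cong_sets[OF sL refl]\<close>)
    also have "\<dots> = (\<integral>\<^sup>+h. \<integral>\<^sup>+x. ennreal (\<rho> (restrict (h(n := x)) {..<n}) * \<rho>' (h(n := x))) * indicator A (h(n := x)) \<partial>\<kappa> h \<partial>L)"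
    proof (rule nn_integral_cong)
      fix h assume "h \<in> space L"
      then have h: "h \<in> space (PiM {..<n} M)" using spL by simp
      have upd: "(\<lambda>x. h(n := x)) \<in> measurable (\<kappa> h) (PiM {..<Suc n} M)"
        by (rule upd_meas[OF h kernel_at(2)[OF \<kappa> h]])
      have upd': "(\<lambda>x. h(n := x)) \<in> measurable (\<kappa> h) (PiM {..<Suc n} M)" by (rule upd)
      have rh: "\<And>x. restrict (h(n := x)) {..<n} = h"
        using h by (auto simp: space_PiM restrict_def fun_eq_iff PiE_def extensional_def)
      have "emeasure (kst M n \<kappa>' h) A = emeasure (density (\<kappa> h) (\<lambda>x. ennreal (\<rho>' (h(n := x))))) ((\<lambda>x. h(n := x)) -` A \<inter> space (\<kappa> h))"
        unfolding kst_def using eq[OF h] A upd_meas[OF h kernel_at(2)[OF \<kappa>' h]]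
        by (simp add: emeasure_distr kernel_at(3)[OF \<kappa> h] kernel_at(3)[OF \<kappa>' h])
      also have "\<dots> = (\<integral>\<^sup>+x. ennreal (\<rho>' (h(n := x))) * indicator ((\<lambda>x. h(n := x)) -` A \<inter> space (\<kappa> h)) x \<partial>\<kappa> h)"
        by (rule emeasure_density) (use measurable_compose[OF upd \<rho>'] measurable_sets[OF upd A] in auto)
      also have "\<dots> = (\<integral>\<^sup>+x. ennreal (\<rho>' (h(n := x))) * indicator A (h(n := x)) \<partial>\<kappa> h)"
        by (rule nn_integral_cong) (auto simp: indicator_def)
      finally have e: "emeasure (kst M n \<kappa>' h) A = (\<integral>\<^sup>+x. ennreal (\<rho>' (h(n := x))) * indicator A (h(n := x)) \<partial>\<kappa> h)" .
      have "(\<integral>\<^sup>+x. ennreal (\<rho> (restrict (h(n := x)) {..<n}) * \<rho>' (h(n := x))) * indicator A (h(n := x)) \<partial>\<kappa> h)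
          = (\<integral>\<^sup>+x. ennreal (\<rho> h) * (ennreal (\<rho>' (h(n := x))) * indicator A (h(n := x))) \<partial>\<kappa> h)"
      proof (rule nn_integral_cong)
        fix x assume "x \<in> space (\<kappa> h)"
        then have "h(n := x) \<in> space (PiM {..<Suc n} M)" using measurable_space[OF upd] by blast
        then show "ennreal (\<rho> (restrict (h(n := x)) {..<n}) * \<rho>' (h(n := x))) * indicator A (h(n := x))
            = ennreal (\<rho> h) * (ennreal (\<rho>' (h(n := x))) * indicator A (h(n := x)))"
          using \<rho>0[OF h] \<rho>'0 by (simp add: rh ennreal_mult mult.assoc)
      qed
      also have "\<dots> = ennreal (\<rho> h) * (\<integral>\<^sup>+x. ennreal (\<rho>' (h(n := x))) * indicator A (h(n := x)) \<partial>\<kappa> h)"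
      proof (rule nn_integral_cmult)
        note [measurable] = upd \<rho>' A
        show "(\<lambda>x. ennreal (\<rho>' (h(n := x))) * indicator A (h(n := x))) \<in> borel_measurable (\<kappa> h)"
          by measurable
      qed
      finally show "ennreal (\<rho> h) * emeasure (kst M n \<kappa>' h) A =
          (\<integral>\<^sup>+x. ennreal (\<rho> (restrict (h(n := x)) {..<n}) * \<rho>' (h(n := x))) * indicator A (h(n := x)) \<partial>\<kappa> h)"
        using e by simp
    qed
    also have "\<dots> = (\<integral>\<^sup>+w. ennreal (\<rho> (restrict w {..<n}) * \<rho>' w) * indicator A w \<partial>bind L (kst M n \<kappa>))"
      by (rule nn_step[OF sL \<kappa>, symmetric]) (use F A in measurable)
    also have "\<dots> = emeasure (density (bind L (kst M n \<kappa>)) (\<lambda>w. ennreal (\<rho> (restrict w {..<n}) * \<rho>' w))) A"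
      by (rule emeasure_density[symmetric]) (use F A sB in \<open>auto simp: measurable_cong_sets[OF sB refl]\<close>)
    finally show "emeasure (bind (density L (\<lambda>h. ennreal (\<rho> h))) (kst M n \<kappa>')) A =
        emeasure (density (bind L (kst M n \<kappa>)) (\<lambda>w. ennreal (\<rho> (restrict w {..<n}) * \<rho>' w))) A" .
  qed
qed

lemma inner_meas:
  fixes f :: "_ \<Rightarrow> real"
  assumes \<kappa>: "\<kappa> \<in> measurable (PiM {..<n} M) (prob_algebra (M n))"
    and f: "f \<in> borel_measurable (PiM {..<Suc n} M)"
  shows "(\<lambda>h. \<integral>x. f (h(n := x)) \<partial>\<kappa> h) \<in> borel_measurable (PiM {..<n} M)"
proof -
  have eq: "(\<integral>x. f (h(n := x)) \<partial>\<kappa> h) = (\<integral>w. f w \<partial>kst M n \<kappa> h)"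
    if h: "h \<in> space (PiM {..<n} M)" for h
    unfolding kst_def
    by (rule integral_distr[symmetric, OF upd_meas[OF h kernel_at(2)[OF \<kappa> h]]]) (simp add: f)
  have m1: "(\<lambda>h. \<integral>w. f w \<partial>kst M n \<kappa> h) \<in> borel_measurable (PiM {..<n} M)"
    by (rule measurable_compose[OF measurable_prob_algebraD[OF kst_meas[OF \<kappa>]]
          integral_measurable_subprob_algebra[OF f]])
  show ?thesis using m1 by (subst measurable_cong[OF eq]) auto
qed

lemma DS:
  fixes \<rho> f :: "_ \<Rightarrow> real"
  assumes L: "L \<in> space (prob_algebra (PiM {..<n} M))"
    and \<kappa>: "\<kappa> \<in> measurable (PiM {..<n} M) (prob_algebra (M n))"
    and \<rho>: "\<rho> \<in> borel_measurable (PiM {..<n} M)"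
    and \<rho>0: "\<And>h. h \<in> space (PiM {..<n} M) \<Longrightarrow> 0 \<le> \<rho> h"
    and \<rho>i: "integrable L \<rho>"
    and f: "f \<in> borel_measurable (PiM {..<Suc n} M)"
    and B: "\<And>w. w \<in> space (PiM {..<Suc n} M) \<Longrightarrow> \<bar>f w\<bar> \<le> B"
  shows "(\<integral>w. \<rho> (restrict w {..<n}) * f w \<partial>bind L (kst M n \<kappa>))
       = (\<integral>h. \<rho> h * (\<integral>x. f (h(n := x)) \<partial>\<kappa> h) \<partial>L)"
proof -
  have sL: "sets L = sets (PiM {..<n} M)" and pL: "prob_space L" using L by (auto simp: space_prob_algebra)
  have spL: "space L = space (PiM {..<n} M)" using sets_eq_imp_space_eq[OF sL] .
  have ne: "space L \<noteq> {}" using prob_space.not_empty[OF pL] .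
  have k: "kst M n \<kappa> \<in> measurable L (subprob_algebra (PiM {..<Suc n} M))"
    using measurable_prob_algebraD[OF kst_meas[OF \<kappa>]] by (simp add: measurable_cong_sets[OF sL refl])
  have sB: "sets (bind L (kst M n \<kappa>)) = sets (PiM {..<Suc n} M)"
    by (rule sets_bind[OF _ ne]) (use k in \<open>auto dest: subprob_measurableD(2)\<close>)
  have spB: "space (bind L (kst M n \<kappa>)) = space (PiM {..<Suc n} M)" using sets_eq_imp_space_eq[OF sB] .
  have rr: "(\<lambda>w. restrict w {..<n}) \<in> measurable (PiM {..<Suc n} M) (PiM {..<n} M)"
    by (intro measurable_restrict_subset) auto
  have F: "(\<lambda>w. \<rho> (restrict w {..<n})) \<in> borel_measurable (PiM {..<Suc n} M)"
    using measurable_compose[OF rr \<rho>] .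
  have db: "bind (density L (\<lambda>h. ennreal (\<rho> h))) (kst M n \<kappa>)
       = density (bind L (kst M n \<kappa>)) (\<lambda>w. ennreal (\<rho> (restrict w {..<n}) * 1))"
    by (rule DB[OF L \<kappa> \<kappa> \<rho> \<rho>0]) (auto simp: density_1)
  have "(\<integral>w. \<rho> (restrict w {..<n}) * f w \<partial>bind L (kst M n \<kappa>))
      = (\<integral>w. f w \<partial>density (bind L (kst M n \<kappa>)) (\<lambda>w. ennreal (\<rho> (restrict w {..<n}))))"
  proof (subst integral_density)
    show "f \<in> borel_measurable (bind L (kst M n \<kappa>))" using f by (simp add: measurable_cong_sets[OF sB refl])
    show "(\<lambda>w. \<rho> (restrict w {..<n})) \<in> borel_measurable (bind L (kst M n \<kappa>))"
      using F by (simp add: measurable_cong_sets[OF sB refl])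
    show "AE x in bind L (kst M n \<kappa>). 0 \<le> \<rho> (restrict x {..<n})"
      by (rule AE_I2) (use measurable_space[OF rr] \<rho>0 spB in auto)
  qed simp
  also have "\<dots> = (\<integral>w. f w \<partial>bind (density L (\<lambda>h. ennreal (\<rho> h))) (kst M n \<kappa>))"
    using db by simp
  also have "\<dots> = (\<integral>h. \<integral>x. f (h(n := x)) \<partial>\<kappa> h \<partial>density L (\<lambda>h. ennreal (\<rho> h)))"
  proof (rule int_step[OF _ _ \<kappa> f B])
    show "sets (density L (\<lambda>h. ennreal (\<rho> h))) = sets (PiM {..<n} M)" using sL by simp
    show "finite_measure (density L (\<lambda>h. ennreal (\<rho> h)))"
    proof
      have "emeasure (density L (\<lambda>h. ennreal (\<rho> h))) (space (density L (\<lambda>h. ennreal (\<rho> h))))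
          = (\<integral>\<^sup>+h. ennreal (\<rho> h) \<partial>L)"
        using \<rho> by (simp add: emeasure_density measurable_cong_sets[OF sL refl] nn_integral_density)
      then show "emeasure (density L (\<lambda>h. ennreal (\<rho> h))) (space (density L (\<lambda>h. ennreal (\<rho> h)))) \<noteq> \<infinity>"
        using integrableD(2)[OF \<rho>i] by simp
    qed
  qed
  also have "\<dots> = (\<integral>h. \<rho> h * (\<integral>x. f (h(n := x)) \<partial>\<kappa> h) \<partial>L)"
  proof (subst integral_density)
    show "(\<lambda>h. \<integral>x. f (h(n := x)) \<partial>\<kappa> h) \<in> borel_measurable L"
      using inner_meas[OF \<kappa> f] by (simp add: measurable_cong_sets[OF sL refl])
    show "\<rho> \<in> borel_measurable L" using \<rho> by (simp add: measurable_cong_sets[OF sL refl])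
    show "AE x in L. 0 \<le> \<rho> x" by (rule AE_I2) (use \<rho>0 spL in auto)
  qed simp
  finally show ?thesis .
qed

lemma wt_restrict:
  assumes "2 * t \<le> k"
  shows "wt dens t (restrict w {..<k}) = wt dens t w"
  unfolding wt_def
proof (rule prod.cong[OF refl])
  fix r assume "r \<in> {..<t}"
  then have "restrict (restrict w {..<k}) {..<2 * r + 2} = restrict w {..<2 * r + 2}"
    using assms by (auto simp: restrict_def fun_eq_iff)
  then show "dens r (restrict (restrict w {..<k}) {..<2 * r + 2}) = dens r (restrict w {..<2 * r + 2})"
    by simp
qed

lemma wt_meas:
  assumes "\<And>r. r < t \<Longrightarrow> dens r \<in> borel_measurable (PiM {..<2 * r + 2} M)" "2 * t \<le> k"
  shows "wt dens t \<in> borel_measurable (PiM {..<k} M)"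
  unfolding wt_def[abs_def]
proof (rule borel_measurable_prod)
  fix r assume r: "r \<in> {..<t}"
  have "(\<lambda>w. restrict w {..<2 * r + 2}) \<in> measurable (PiM {..<k} M) (PiM {..<2 * r + 2} M)"
    using r assms(2) by (intro measurable_restrict_subset) auto
  then show "(\<lambda>w. dens r (restrict w {..<2 * r + 2})) \<in> borel_measurable (PiM {..<k} M)"
    using assms(1) r by (intro measurable_compose[OF _ assms(1)]) auto
qed

lemma wt_nonneg:
  assumes "\<And>r w. r < t \<Longrightarrow> w \<in> space (PiM {..<2 * r + 2} M) \<Longrightarrow> 0 \<le> dens r w" "2 * t \<le> k"
    "w \<in> space (PiM {..<k} M)"
  shows "0 \<le> wt dens t w"
  unfolding wt_def
proof (rule prod_nonneg)
  fix r assume r: "r \<in> {..<t}"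
  have "(\<lambda>w. restrict w {..<2 * r + 2}) \<in> measurable (PiM {..<k} M) (PiM {..<2 * r + 2} M)"
    using r assms(2) by (intro measurable_restrict_subset) auto
  then have "restrict w {..<2 * r + 2} \<in> space (PiM {..<2 * r + 2} M)"
    using assms(3) by (rule measurable_space)
  then show "0 \<le> dens r (restrict w {..<2 * r + 2})"
    using assms(1) r by blast
qed

lemma marg_int:
  fixes f :: "_ \<Rightarrow> real"
  assumes V: "validK M K n" and k: "k \<le> n" and f: "f \<in> borel_measurable (PiM {..<k} M)"
  shows "(\<integral>w. f (restrict w {..<k}) \<partial>law M K n) = (\<integral>w. f w \<partial>law M K k)"
    "integrable (law M K n) (\<lambda>w. f (restrict w {..<k})) \<longleftrightarrow> integrable (law M K k) f"
proof -
  have r: "(\<lambda>w. restrict w {..<k}) \<in> measurable (law M K n) (PiM {..<k} M)"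
    unfolding measurable_cong_sets[OF law_props(2)[OF V] refl] using k by (intro measurable_restrict_subset) auto
  note e = law_marg[OF V k, symmetric]
  show "(\<integral>w. f (restrict w {..<k}) \<partial>law M K n) = (\<integral>w. f w \<partial>law M K k)"
    unfolding e by (rule integral_distr[symmetric, OF r f])
  show "integrable (law M K n) (\<lambda>w. f (restrict w {..<k})) \<longleftrightarrow> integrable (law M K k) f"
    unfolding e by (rule integrable_distr_eq[symmetric, OF r f])
qed

lemma law_cong: "(\<And>i. i < n \<Longrightarrow> K i = K' i) \<Longrightarrow> law M K n = law M K' n"
  by (induction n) (simp_all add: law_Suc')

lemma tower:
  assumes V: "validK M K N" and N: "0 < N" and Y: "Y \<in> borel_measurable (M (N - 1))"
    and YB: "\<And>y. y \<in> space (M (N - 1)) \<Longrightarrow> \<bar>Y y\<bar> \<le> B"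
  shows "n \<le> N \<Longrightarrow> (\<integral>w. val K Y N n w \<partial>law M K n) = val K Y N 0 (\<lambda>_. undefined)"
proof (induction n)
  case 0
  show ?case using val_props(1)[OF V N Y YB, of 0] by (simp add: integral_return)
next
  case (Suc n)
  have Vn: "validK M K n" using validK_mono[OF V] Suc.prems by simp
  have Kn: "K n \<in> measurable (PiM {..<n} M) (prob_algebra (M n))"
    using V Suc.prems by (simp add: validK_def)
  have "(\<integral>w. val K Y N (Suc n) w \<partial>law M K (Suc n)) = (\<integral>h. \<integral>x. val K Y N (Suc n) (h(n := x)) \<partial>K n h \<partial>law M K n)"
    unfolding law_Suc'
    by (rule int_step[OF law_props(2)[OF Vn] _ Kn val_props(1)[OF V N Y YB Suc.prems]
          val_props(2)[OF V N Y YB Suc.prems]])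
      (use law_props(1)[OF Vn] in \<open>simp add: prob_space_def\<close>)
  also have "\<dots> = (\<integral>h. val K Y N n h \<partial>law M K n)"
    by (rule Bochner_Integration.integral_cong[OF refl])
      (use Suc.prems law_props(3)[OF Vn] in \<open>simp add: val_unfold\<close>)
  finally show ?case using Suc by simp
qed

lemma CM:
  fixes dens :: "nat \<Rightarrow> (nat \<Rightarrow> 'w) \<Rightarrow> real"
  assumes vKh: "validK M (interleave E Th) (2 * \<tau> + 1)" and vG: "validK M (interleave E g) (2 * \<tau> + 1)"
    and dens_meas: "\<And>s. s < \<tau> \<Longrightarrow> dens s \<in> borel_measurable (PiM {..<2 * s + 2} M)"
    and dens_nonneg: "\<And>s w. s < \<tau> \<Longrightarrow> w \<in> space (PiM {..<2 * s + 2} M) \<Longrightarrow> 0 \<le> dens s w"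
    and g_density: "\<And>s h. s < \<tau> \<Longrightarrow> h \<in> space (PiM {..<2 * s + 1} M) \<Longrightarrow>
                      g s h = density (Th s h) (\<lambda>a. ennreal (dens s (h(2 * s + 1 := a))))"
  shows "m \<le> 2 * \<tau> \<Longrightarrow> law M (interleave E g) m = density (law M (interleave E Th) m) (\<lambda>w. ennreal (wt dens (m div 2) w))"
proof (induction m)
  case 0
  show ?case by (simp add: wt_def density_1)
next
  case (Suc m)
  have IH: "law M (interleave E g) m = density (law M (interleave E Th) m) (\<lambda>w. ennreal (wt dens (m div 2) w))"
    using Suc by simp
  have vKm: "validK M (interleave E Th) m" "validK M (interleave E Th) (Suc m)"
    using validK_mono[OF vKh] Suc.prems by auto
  have Lm: "law M (interleave E Th) m \<in> space (prob_algebra (PiM {..<m} M))" by (rule law_space[OF vKm(1)])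
  have Km: "interleave E Th m \<in> measurable (PiM {..<m} M) (prob_algebra (M m))"
    using vKh Suc.prems by (simp add: validK_def)
  have Gm: "interleave E g m \<in> measurable (PiM {..<m} M) (prob_algebra (M m))"
    using vG Suc.prems by (simp add: validK_def)
  have dm: "\<And>r. r < m div 2 \<Longrightarrow> dens r \<in> borel_measurable (PiM {..<2 * r + 2} M)"
    using Suc.prems by (intro dens_meas) linarith
  have dn: "\<And>r w. r < m div 2 \<Longrightarrow> w \<in> space (PiM {..<2 * r + 2} M) \<Longrightarrow> 0 \<le> dens r w"
    using Suc.prems by (intro dens_nonneg) linarith+
  have wm: "wt dens (m div 2) \<in> borel_measurable (PiM {..<m} M)"
    by (rule wt_meas[OF dm]) auto
  have wn: "\<And>h. h \<in> space (PiM {..<m} M) \<Longrightarrow> 0 \<le> wt dens (m div 2) h"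
    by (rule wt_nonneg[OF dn]) auto
  have "law M (interleave E g) (Suc m) = bind (law M (interleave E g) m) (kst M m (interleave E g m))"
    by (rule law_Suc')
  also have "\<dots> = bind (density (law M (interleave E Th) m) (\<lambda>w. ennreal (wt dens (m div 2) w))) (kst M m (interleave E g m))"
    using IH by simp
  finally have L1: "law M (interleave E g) (Suc m) = \<dots>" .
  show ?case
  proof (cases "even m")
    case True
    have eqk: "interleave E g m = interleave E Th m" using True by (simp add: interleave_def)
    have "bind (density (law M (interleave E Th) m) (\<lambda>w. ennreal (wt dens (m div 2) w))) (kst M m (interleave E Th m))
        = density (law M (interleave E Th) (Suc m)) (\<lambda>w. ennreal (wt dens (m div 2) (restrict w {..<m}) * 1))"
      unfolding law_Suc'
      by (rule DB[OF Lm Km Km wm wn]) (auto simp: density_1)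
    also have "\<dots> = density (law M (interleave E Th) (Suc m)) (\<lambda>w. ennreal (wt dens (Suc m div 2) w))"
      using True by (simp add: wt_restrict)
    finally show ?thesis using L1 eqk by simp
  next
    case False
    then obtain s where m: "m = 2 * s + 1" using oddE by blast
    have s: "s < \<tau>" using Suc.prems m by simp
    have md: "m div 2 = s" "Suc m div 2 = Suc s" using m by auto
    have eqk: "interleave E g m = g s" "interleave E Th m = Th s" using m by (simp_all add: interleave_def)
    have "bind (density (law M (interleave E Th) m) (\<lambda>w. ennreal (wt dens (m div 2) w))) (kst M m (interleave E g m))
        = density (law M (interleave E Th) (Suc m)) (\<lambda>w. ennreal (wt dens (m div 2) (restrict w {..<m}) * dens s w))"
      unfolding law_Suc'
    proof (rule DB[OF Lm Km Gm wm wn])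
      show "dens s \<in> borel_measurable (PiM {..<Suc m} M)" using dens_meas[OF s] m by simp
      show "\<And>w. w \<in> space (PiM {..<Suc m} M) \<Longrightarrow> 0 \<le> dens s w" using dens_nonneg[OF s] m by simp
      show "\<And>h. h \<in> space (PiM {..<m} M) \<Longrightarrow> interleave E g m h = density (interleave E Th m h) (\<lambda>x. ennreal (dens s (h(m := x))))"
        using g_density[OF s] m eqk by simp
    qed
    also have "\<dots> = density (law M (interleave E Th) (Suc m)) (\<lambda>w. ennreal (wt dens (Suc m div 2) w))"
    proof (rule density_cong)
      have sS: "sets (law M (interleave E Th) (Suc m)) = sets (PiM {..<Suc m} M)" by (rule law_props(2)[OF vKm(2)])
      have rr: "(\<lambda>w. restrict w {..<m}) \<in> measurable (PiM {..<Suc m} M) (PiM {..<m} M)"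
        by (intro measurable_restrict_subset) auto
      have "(\<lambda>w. wt dens (m div 2) (restrict w {..<m}) * dens s w) \<in> borel_measurable (PiM {..<Suc m} M)"
        using measurable_compose[OF rr wm] dens_meas[OF s] m by simp
      then show "(\<lambda>w. ennreal (wt dens (m div 2) (restrict w {..<m}) * dens s w)) \<in> borel_measurable (law M (interleave E Th) (Suc m))"
        by (simp add: measurable_cong_sets[OF sS refl])
      have "wt dens (Suc m div 2) \<in> borel_measurable (PiM {..<Suc m} M)"
        by (rule wt_meas) (use dens_meas md s m in auto)
      then show "(\<lambda>w. ennreal (wt dens (Suc m div 2) w)) \<in> borel_measurable (law M (interleave E Th) (Suc m))"
        by (simp add: measurable_cong_sets[OF sS refl])
      show "AE w in law M (interleave E Th) (Suc m). ennreal (wt dens (m div 2) (restrict w {..<m}) * dens s w) = ennreal (wt dens (Suc m div 2) w)"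
      proof (rule AE_I2)
        fix w assume "w \<in> space (law M (interleave E Th) (Suc m))"
        then have w: "w \<in> space (PiM {..<Suc m} M)" using law_props(3)[OF vKm(2)] by simp
        then have rw: "restrict w {..<2 * s + 2} = w" using m by (simp add: space_PiM)
        have "wt dens (Suc m div 2) w = wt dens s w * dens s (restrict w {..<2 * s + 2})"
          unfolding md by (simp add: wt_def)
        also have "\<dots> = wt dens (m div 2) (restrict w {..<m}) * dens s w"
          using rw md m by (simp add: wt_restrict)
        finally show "ennreal (wt dens (m div 2) (restrict w {..<m}) * dens s w) = ennreal (wt dens (Suc m div 2) w)"
          by simp
      qed
    qed
    finally show ?thesis using L1 by simp
  qed
qed

lemma integrable_mult_bdd:
  fixes f g :: "_ \<Rightarrow> real"
  assumes "integrable \<mu> f" "g \<in> borel_measurable \<mu>" "\<And>x. x \<in> space \<mu> \<Longrightarrow> \<bar>g x\<bar> \<le> C"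
  shows "integrable \<mu> (\<lambda>x. f x * g x)"
proof (rule Bochner_Integration.integrable_bound)
  show "integrable \<mu> (\<lambda>x. \<bar>C\<bar> * f x)" using assms(1) by (rule integrable_mult_right)
  show "(\<lambda>x. f x * g x) \<in> borel_measurable \<mu>"
    using borel_measurable_integrable[OF assms(1)] assms(2) by (rule borel_measurable_times)
  show "AE x in \<mu>. norm (f x * g x) \<le> norm (\<bar>C\<bar> * f x)"
  proof (rule AE_I2)
    fix x assume x: "x \<in> space \<mu>"
    have "\<bar>g x\<bar> \<le> C" using assms(3)[OF x] .
    then have "\<bar>g x\<bar> \<le> \<bar>C\<bar>" using abs_ge_self order_trans by blast
    then have "\<bar>f x\<bar> * \<bar>g x\<bar> \<le> \<bar>f x\<bar> * \<bar>C\<bar>" by (rule mult_left_mono) simp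
    then show "norm (f x * g x) \<le> norm (\<bar>C\<bar> * f x)"
      by (simp add: abs_mult mult.commute)
  qed
qed

lemma valid_il:
  assumes "\<And>s. s \<le> \<tau> \<Longrightarrow> X s \<in> measurable (PiM {..<2 * s} M) (prob_algebra (M (2 * s)))"
    and "\<And>s. s < \<tau> \<Longrightarrow> Z s \<in> measurable (PiM {..<2 * s + 1} M) (prob_algebra (M (2 * s + 1)))"
  shows "validK M (interleave X Z) (2 * \<tau> + 1)"
  unfolding validK_def
proof (intro allI impI)
  fix i assume i: "i < 2 * \<tau> + 1"
  show "interleave X Z i \<in> measurable (PiM {..<i} M) (prob_algebra (M i))"
  proof (cases "even i")
    case True
    then obtain s where s: "i = 2 * s" by blast
    then show ?thesis using assms(1)[of s] i by (simp add: interleave_def)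
  next
    case False
    then obtain s where s: "i = 2 * s + 1" using oddE by blast
    then show ?thesis using assms(2)[of s] i by (simp add: interleave_def)
  qed
qed


theorem theoremC1:
  fixes M :: "nat \<Rightarrow> 'w measure"
    and \<tau> :: nat
    and E Ehat Trt Trthat g :: "nat \<Rightarrow> (nat \<Rightarrow> 'w) \<Rightarrow> 'w measure"
    and dens :: "nat \<Rightarrow> (nat \<Rightarrow> 'w) \<Rightarrow> real"
    and Y :: "'w \<Rightarrow> real"
  assumes E_meas: "\<And>s. s \<le> \<tau> \<Longrightarrow> E s \<in> measurable (PiM {..<2 * s} M) (prob_algebra (M (2 * s)))"
    and Ehat_meas: "\<And>s. s \<le> \<tau> \<Longrightarrow> Ehat s \<in> measurable (PiM {..<2 * s} M) (prob_algebra (M (2 * s)))"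
    and Pi_meas: "\<And>s. s < \<tau> \<Longrightarrow> Trt s \<in> measurable (PiM {..<2 * s + 1} M) (prob_algebra (M (2 * s + 1)))"
    and Pihat_meas: "\<And>s. s < \<tau> \<Longrightarrow> Trthat s \<in> measurable (PiM {..<2 * s + 1} M) (prob_algebra (M (2 * s + 1)))"
    and g_meas: "\<And>s. s < \<tau> \<Longrightarrow> g s \<in> measurable (PiM {..<2 * s + 1} M) (prob_algebra (M (2 * s + 1)))"
    and Y_meas: "Y \<in> borel_measurable (M (2 * \<tau>))"
    and Y_bdd: "\<exists>B. \<forall>y\<in>space (M (2 * \<tau>)). \<bar>Y y\<bar> \<le> B"
    and dens_meas: "\<And>s. s < \<tau> \<Longrightarrow> dens s \<in> borel_measurable (PiM {..<2 * s + 2} M)"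
    and dens_nonneg: "\<And>s w. s < \<tau> \<Longrightarrow> w \<in> space (PiM {..<2 * s + 2} M) \<Longrightarrow> 0 \<le> dens s w"
    and g_density: "\<And>s h. s < \<tau> \<Longrightarrow> h \<in> space (PiM {..<2 * s + 1} M) \<Longrightarrow>
                      g s h = density (Trthat s h) (\<lambda>a. ennreal (dens s (h(2 * s + 1 := a))))"
    and wt_integrable: "\<And>t. t \<in> {1..\<tau>} \<Longrightarrow>
                      integrable (law M (interleave E Trt) (2 * t)) (wt dens t)"
  shows "psi Ehat g Y \<tau> - psi E g Y \<tau> + (\<integral>w. EIF Ehat g dens Y \<tau> w \<partial>law M (interleave E Trt) (2 * \<tau> + 1))
     = (\<Sum>t\<in>{1..\<tau>}.
          (\<integral>w. wt dens t w * ((\<integral>x. val (interleave Ehat g) Y (2 * \<tau> + 1) (2 * t + 1) (w(2 * t := x)) \<partial>E t w)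
                                 - val (interleave Ehat g) Y (2 * \<tau> + 1) (2 * t) w)
              \<partial>law M (interleave E Trt) (2 * t))
        - (\<integral>w. wt dens t w * ((\<integral>x. val (interleave Ehat g) Y (2 * \<tau> + 1) (2 * t + 1) (w(2 * t := x)) \<partial>E t w)
                                 - val (interleave Ehat g) Y (2 * \<tau> + 1) (2 * t) w)
              \<partial>law M (interleave E Trthat) (2 * t)))"
proof -
  let ?N = "2 * \<tau> + 1"
  let ?F = "interleave Ehat g"
  let ?K = "interleave E Trt"
  let ?Kh = "interleave E Trthat"
  let ?G = "interleave E g"
  let ?V = "\<lambda>n. val ?F Y ?N n"
  obtain B where YB: "\<forall>y\<in>space (M (2 * \<tau>)). \<bar>Y y\<bar> \<le> B" using Y_bdd by blast
  have YB': "\<And>y. y \<in> space (M (?N - 1)) \<Longrightarrow> \<bar>Y y\<bar> \<le> B" using YB by simp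
  have Ym: "Y \<in> borel_measurable (M (?N - 1))" using Y_meas by simp
  have N0: "0 < ?N" by simp
  have vF: "validK M ?F ?N" by (rule valid_il[OF Ehat_meas g_meas])
  have vK: "validK M ?K ?N" by (rule valid_il[OF E_meas Pi_meas])
  have vKh: "validK M ?Kh ?N" by (rule valid_il[OF E_meas Pihat_meas])
  have vG: "validK M ?G ?N" by (rule valid_il[OF E_meas g_meas])
  have VP: "\<And>n. n \<le> ?N \<Longrightarrow> ?V n \<in> borel_measurable (PiM {..<n} M)"
    using val_props(1)[OF vF N0 Ym YB'] by blast
  have VB: "\<And>n h. n \<le> ?N \<Longrightarrow> h \<in> space (PiM {..<n} M) \<Longrightarrow> \<bar>?V n h\<bar> \<le> B"
    using val_props(2)[OF vF N0 Ym YB'] by blast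
  have VPs: "\<And>t. t \<le> \<tau> \<Longrightarrow> ?V (Suc (2 * t)) \<in> borel_measurable (PiM {..<Suc (2 * t)} M)"
    using VP by simp
  have VBs: "\<And>t h. t \<le> \<tau> \<Longrightarrow> h \<in> space (PiM {..<Suc (2 * t)} M) \<Longrightarrow> \<bar>?V (Suc (2 * t)) h\<bar> \<le> B"
    using VB by simp
  have il_even: "\<And>X Z s. interleave X Z (2 * s) = X s" by (simp add: interleave_def)
  have il_odd: "\<And>X Z s. interleave X Z (Suc (2 * s)) = Z s" by (simp add: interleave_def)
  have vKn: "\<And>n. n \<le> ?N \<Longrightarrow> validK M ?K n" using validK_mono[OF vK] by blast
  have vKhn: "\<And>n. n \<le> ?N \<Longrightarrow> validK M ?Kh n" using validK_mono[OF vKh] by blast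
  have vGn: "\<And>n. n \<le> ?N \<Longrightarrow> validK M ?G n" using validK_mono[OF vG] by blast
  have Et: "\<And>t. t \<le> \<tau> \<Longrightarrow> E t \<in> measurable (PiM {..<2 * t} M) (prob_algebra (M (2 * t)))"
    by (rule E_meas)
  have dmeas: "\<And>t. t \<le> \<tau> \<Longrightarrow> wt dens t \<in> borel_measurable (PiM {..<2 * t} M)"
    by (rule wt_meas) (use dens_meas in auto)
  have dnn: "\<And>t h. t \<le> \<tau> \<Longrightarrow> h \<in> space (PiM {..<2 * t} M) \<Longrightarrow> 0 \<le> wt dens t h"
    by (rule wt_nonneg) (use dens_nonneg in auto)

  define \<phi> where "\<phi> t h = (\<integral>x. ?V (2 * t + 1) (h(2 * t := x)) \<partial>E t h) - ?V (2 * t) h" for t h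
  have inner_m: "\<And>t. t \<le> \<tau> \<Longrightarrow> (\<lambda>h. \<integral>x. ?V (2 * t + 1) (h(2 * t := x)) \<partial>E t h) \<in> borel_measurable (PiM {..<2 * t} M)"
    using inner_meas[OF Et] VP by simp
  have inner_b: "\<And>t h. t \<le> \<tau> \<Longrightarrow> h \<in> space (PiM {..<2 * t} M) \<Longrightarrow> \<bar>\<integral>x. ?V (2 * t + 1) (h(2 * t := x)) \<partial>E t h\<bar> \<le> B"
  proof -
    fix t h assume t: "t \<le> \<tau>" and h: "h \<in> space (PiM {..<2 * t} M)"
    have u: "(\<lambda>x. h(2 * t := x)) \<in> measurable (E t h) (PiM {..<Suc (2 * t)} M)"
      by (rule upd_meas[OF h kernel_at(2)[OF Et[OF t] h]])
    show "\<bar>\<integral>x. ?V (2 * t + 1) (h(2 * t := x)) \<partial>E t h\<bar> \<le> B"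
    proof (rule int_bound(2)[OF kernel_at(1)[OF Et[OF t] h]])
      show "(\<lambda>x. ?V (2 * t + 1) (h(2 * t := x))) \<in> borel_measurable (E t h)"
        using measurable_compose[OF u VPs[OF t]] by simp
      fix x assume "x \<in> space (E t h)"
      then have "h(2 * t := x) \<in> space (PiM {..<Suc (2 * t)} M)" using measurable_space[OF u] by blast
      then show "\<bar>?V (2 * t + 1) (h(2 * t := x))\<bar> \<le> B" using VBs[OF t] by simp
    qed
  qed
  have \<phi>m: "\<And>t. t \<le> \<tau> \<Longrightarrow> \<phi> t \<in> borel_measurable (PiM {..<2 * t} M)"
    unfolding \<phi>_def[abs_def] using inner_m VP by (intro borel_measurable_diff) auto
  have \<phi>b: "\<And>t h. t \<le> \<tau> \<Longrightarrow> h \<in> space (PiM {..<2 * t} M) \<Longrightarrow> \<bar>\<phi> t h\<bar> \<le> 2 * B"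
  proof -
    fix t h assume t: "t \<le> \<tau>" and h: "h \<in> space (PiM {..<2 * t} M)"
    have "\<bar>?V (2 * t) h\<bar> \<le> B" using VB[OF _ h] t by simp
    then show "\<bar>\<phi> t h\<bar> \<le> 2 * B" using inner_b[OF t h] unfolding \<phi>_def by linarith
  qed

  define H where "H t u = wt dens t u * (?V (2 * t + 1) u - ?V (2 * t) (restrict u {..<2 * t}))" for t u
  have A1: "\<And>t w. wt dens t w * (?V (2 * t + 1) (restrict w {..<2 * t + 1}) - ?V (2 * t) (restrict w {..<2 * t}))
      = H t (restrict w {..<2 * t + 1})"
  proof -
    fix t :: nat and w :: "nat \<Rightarrow> 'w"
    have r: "restrict (restrict w {..<2 * t + 1}) {..<2 * t} = restrict w {..<2 * t}"
      by (auto simp: restrict_def fun_eq_iff)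
    have wr: "wt dens t (restrict w {..<2 * t + 1}) = wt dens t w" by (rule wt_restrict) simp
    show "wt dens t w * (?V (2 * t + 1) (restrict w {..<2 * t + 1}) - ?V (2 * t) (restrict w {..<2 * t}))
      = H t (restrict w {..<2 * t + 1})"
      by (simp only: H_def r wr)
  qed
  have fm: "\<And>t. t \<le> \<tau> \<Longrightarrow> (\<lambda>u. ?V (2 * t + 1) u - ?V (2 * t) (restrict u {..<2 * t})) \<in> borel_measurable (PiM {..<Suc (2 * t)} M)"
  proof -
    fix t assume t: "t \<le> \<tau>"
    have rr: "(\<lambda>w. restrict w {..<2 * t}) \<in> measurable (PiM {..<Suc (2 * t)} M) (PiM {..<2 * t} M)"
      by (intro measurable_restrict_subset) auto
    show "(\<lambda>u. ?V (2 * t + 1) u - ?V (2 * t) (restrict u {..<2 * t})) \<in> borel_measurable (PiM {..<Suc (2 * t)} M)"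
      using VPs[OF t] measurable_compose[OF rr VP[of "2 * t"]] t by (intro borel_measurable_diff) auto
  qed
  have fb: "\<And>t u. t \<le> \<tau> \<Longrightarrow> u \<in> space (PiM {..<Suc (2 * t)} M) \<Longrightarrow> \<bar>?V (2 * t + 1) u - ?V (2 * t) (restrict u {..<2 * t})\<bar> \<le> 2 * B"
  proof -
    fix t u assume t: "t \<le> \<tau>" and u: "u \<in> space (PiM {..<Suc (2 * t)} M)"
    have rr: "(\<lambda>w. restrict w {..<2 * t}) \<in> measurable (PiM {..<Suc (2 * t)} M) (PiM {..<2 * t} M)"
      by (intro measurable_restrict_subset) auto
    have "\<bar>?V (2 * t + 1) u\<bar> \<le> B" using VB[of "2 * t + 1" u] t u by simp
    moreover have "\<bar>?V (2 * t) (restrict u {..<2 * t})\<bar> \<le> B"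
      using VB[of "2 * t"] t measurable_space[OF rr u] by simp
    ultimately show "\<bar>?V (2 * t + 1) u - ?V (2 * t) (restrict u {..<2 * t})\<bar> \<le> 2 * B" by linarith
  qed
  have dmeasS: "\<And>t. t \<le> \<tau> \<Longrightarrow> wt dens t \<in> borel_measurable (PiM {..<Suc (2 * t)} M)"
    by (rule wt_meas) (use dens_meas in auto)
  have Hm: "\<And>t. t \<le> \<tau> \<Longrightarrow> H t \<in> borel_measurable (PiM {..<Suc (2 * t)} M)"
    unfolding H_def[abs_def] by (intro borel_measurable_times dmeasS fm)
  have wtI1: "\<And>t. t \<in> {1..\<tau>} \<Longrightarrow> integrable (law M ?K (Suc (2 * t))) (wt dens t)"
  proof -
    fix t assume t: "t \<in> {1..\<tau>}"
    have "integrable (law M ?K (Suc (2 * t))) (\<lambda>w. wt dens t (restrict w {..<2 * t}))"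
      using marg_int(2)[OF vKn[of "Suc (2 * t)"] _ dmeas, of t] wt_integrable[OF t] t by simp
    then show "integrable (law M ?K (Suc (2 * t))) (wt dens t)" by (simp add: wt_restrict)
  qed
  have HI: "\<And>t. t \<in> {1..\<tau>} \<Longrightarrow> integrable (law M ?K (Suc (2 * t))) (H t)"
  proof -
    fix t assume t: "t \<in> {1..\<tau>}"
    have sS: "sets (law M ?K (Suc (2 * t))) = sets (PiM {..<Suc (2 * t)} M)"
      using law_props(2)[OF vKn[of "Suc (2 * t)"]] t by simp
    have spS: "space (law M ?K (Suc (2 * t))) = space (PiM {..<Suc (2 * t)} M)"
      using law_props(3)[OF vKn[of "Suc (2 * t)"]] t by simp
    show "integrable (law M ?K (Suc (2 * t))) (H t)"
      unfolding H_def[abs_def]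
      by (rule integrable_mult_bdd[OF wtI1[OF t]])
        (use fm[of t] fb[of t] t spS in \<open>auto simp: measurable_cong_sets[OF sS refl]\<close>)
  qed
  have T1: "\<And>t. t \<in> {1..\<tau>} \<Longrightarrow> (\<integral>w. H t (restrict w {..<2 * t + 1}) \<partial>law M ?K ?N)
      = (\<integral>w. wt dens t w * \<phi> t w \<partial>law M ?K (2 * t))"
  proof -
    fix t assume t: "t \<in> {1..\<tau>}"
    have tt: "t \<le> \<tau>" using t by simp
    have L: "law M ?K (2 * t) \<in> space (prob_algebra (PiM {..<2 * t} M))"
      using law_space[OF vKn[of "2 * t"]] tt by simp
    have K2t: "?K (2 * t) \<in> measurable (PiM {..<2 * t} M) (prob_algebra (M (2 * t)))"
      using Et[OF tt] by (simp add: il_even)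
    have "(\<integral>w. H t (restrict w {..<2 * t + 1}) \<partial>law M ?K ?N) = (\<integral>w. H t w \<partial>law M ?K (Suc (2 * t)))"
      using marg_int(1)[OF vK _ Hm[OF tt]] tt by simp
    also have "\<dots> = (\<integral>w. wt dens t (restrict w {..<2 * t}) * (?V (2 * t + 1) w - ?V (2 * t) (restrict w {..<2 * t}))
        \<partial>bind (law M ?K (2 * t)) (kst M (2 * t) (?K (2 * t))))"
      unfolding law_Suc'[symmetric] H_def by (simp add: wt_restrict)
    also have "\<dots> = (\<integral>h. wt dens t h * (\<integral>x. ?V (2 * t + 1) (h(2 * t := x)) - ?V (2 * t) (restrict (h(2 * t := x)) {..<2 * t}) \<partial>?K (2 * t) h)
        \<partial>law M ?K (2 * t))"
      by (rule DS[OF L K2t dmeas[OF tt] dnn[OF tt] wt_integrable[OF t] fm[OF tt] fb[OF tt]])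
    also have "\<dots> = (\<integral>h. wt dens t h * \<phi> t h \<partial>law M ?K (2 * t))"
    proof (rule Bochner_Integration.integral_cong[OF refl])
      fix h assume "h \<in> space (law M ?K (2 * t))"
      then have h: "h \<in> space (PiM {..<2 * t} M)" using law_props(3)[OF vKn[of "2 * t"]] tt by simp
      interpret prob_space "E t h" using kernel_at(1)[OF Et[OF tt] h] .
      have rh: "\<And>x. restrict (h(2 * t := x)) {..<2 * t} = h"
        using h by (auto simp: space_PiM restrict_def fun_eq_iff PiE_def extensional_def)
      have u: "(\<lambda>x. h(2 * t := x)) \<in> measurable (E t h) (PiM {..<Suc (2 * t)} M)"
        by (rule upd_meas[OF h kernel_at(2)[OF Et[OF tt] h]])
      have ii: "integrable (E t h) (\<lambda>x. ?V (2 * t + 1) (h(2 * t := x)))"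
      proof (rule int_bound(1)[OF prob_space_axioms])
        show "(\<lambda>x. ?V (2 * t + 1) (h(2 * t := x))) \<in> borel_measurable (E t h)"
          using measurable_compose[OF u VPs[OF tt]] by simp
        fix x assume "x \<in> space (E t h)"
        then have "h(2 * t := x) \<in> space (PiM {..<Suc (2 * t)} M)" using measurable_space[OF u] by blast
        then show "\<bar>?V (2 * t + 1) (h(2 * t := x))\<bar> \<le> B" using VBs[OF tt] by simp
      qed
      have "(\<integral>x. ?V (2 * t + 1) (h(2 * t := x)) - ?V (2 * t) (restrict (h(2 * t := x)) {..<2 * t}) \<partial>E t h)
          = (\<integral>x. ?V (2 * t + 1) (h(2 * t := x)) - ?V (2 * t) h \<partial>E t h)"
        by (simp only: rh)
      also have "\<dots> = \<phi> t h"
        unfolding \<phi>_def using ii by (simp add: prob_space)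
      finally show "wt dens t h * (\<integral>x. ?V (2 * t + 1) (h(2 * t := x)) - ?V (2 * t) (restrict (h(2 * t := x)) {..<2 * t}) \<partial>?K (2 * t) h)
          = wt dens t h * \<phi> t h"
        by (simp add: il_even)
    qed
    finally show "(\<integral>w. H t (restrict w {..<2 * t + 1}) \<partial>law M ?K ?N) = (\<integral>w. wt dens t w * \<phi> t w \<partial>law M ?K (2 * t))" .
  qed
  have lawKN: "prob_space (law M ?K ?N)" by (rule law_props(1)[OF vK])
  have sKN: "sets (law M ?K ?N) = sets (PiM {..<?N} M)" by (rule law_props(2)[OF vK])
  have spKN: "space (law M ?K ?N) = space (PiM {..<?N} M)" by (rule law_props(3)[OF vK])
  have r1: "(\<lambda>w. restrict w {..<1}) \<in> measurable (PiM {..<?N} M) (PiM {..<1} M)"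
    by (intro measurable_restrict_subset) auto
  have V1m: "(\<lambda>w. ?V 1 (restrict w {..<1})) \<in> borel_measurable (law M ?K ?N)"
  proof -
    have "(\<lambda>w. ?V 1 (restrict w {..<1})) \<in> borel_measurable (PiM {..<?N} M)"
      using measurable_compose[OF r1 VP[of 1]] by simp
    then show ?thesis unfolding measurable_cong_sets[OF sKN refl] .
  qed
  have V1I: "integrable (law M ?K ?N) (\<lambda>w. ?V 1 (restrict w {..<1}))"
    by (rule int_bound(1)[OF lawKN V1m]) (use VB[of 1] measurable_space[OF r1] spKN in auto)
  have HIN: "\<And>t. t \<in> {1..\<tau>} \<Longrightarrow> integrable (law M ?K ?N) (\<lambda>w. H t (restrict w {..<2 * t + 1}))"
    using marg_int(2)[OF vK _ Hm] HI by simp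
  have EIFeq: "\<And>w. EIF Ehat g dens Y \<tau> w = (?V 1 (restrict w {..<1}) - psi Ehat g Y \<tau>)
      + (\<Sum>t\<in>{1..\<tau>}. H t (restrict w {..<2 * t + 1}))"
    unfolding EIF_def using A1 by simp
  have PA: "(\<integral>w. EIF Ehat g dens Y \<tau> w \<partial>law M ?K ?N)
      = (\<integral>w. ?V 1 w \<partial>law M ?K 1) - psi Ehat g Y \<tau> + (\<Sum>t\<in>{1..\<tau>}. \<integral>w. wt dens t w * \<phi> t w \<partial>law M ?K (2 * t))"
  proof -
    have "(\<integral>w. EIF Ehat g dens Y \<tau> w \<partial>law M ?K ?N)
        = (\<integral>w. (?V 1 (restrict w {..<1}) - psi Ehat g Y \<tau>) + (\<Sum>t\<in>{1..\<tau>}. H t (restrict w {..<2 * t + 1})) \<partial>law M ?K ?N)"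
      by (simp only: EIFeq)
    also have "\<dots> = (\<integral>w. ?V 1 (restrict w {..<1}) - psi Ehat g Y \<tau> \<partial>law M ?K ?N)
        + (\<integral>w. (\<Sum>t\<in>{1..\<tau>}. H t (restrict w {..<2 * t + 1})) \<partial>law M ?K ?N)"
      using V1I HIN lawKN by (intro Bochner_Integration.integral_add) (auto simp: prob_space_def finite_measure.integrable_const)
    also have "(\<integral>w. ?V 1 (restrict w {..<1}) - psi Ehat g Y \<tau> \<partial>law M ?K ?N)
        = (\<integral>w. ?V 1 (restrict w {..<1}) \<partial>law M ?K ?N) - psi Ehat g Y \<tau>"
      using V1I lawKN by (simp add: prob_space.prob_space prob_space_def finite_measure.integrable_const)
    also have "(\<integral>w. ?V 1 (restrict w {..<1}) \<partial>law M ?K ?N) = (\<integral>w. ?V 1 w \<partial>law M ?K 1)"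
      using marg_int(1)[OF vK _ VP[of 1]] by simp
    also have "(\<integral>w. (\<Sum>t\<in>{1..\<tau>}. H t (restrict w {..<2 * t + 1})) \<partial>law M ?K ?N)
        = (\<Sum>t\<in>{1..\<tau>}. \<integral>w. H t (restrict w {..<2 * t + 1}) \<partial>law M ?K ?N)"
      using HIN by (intro Bochner_Integration.integral_sum) auto
    also have "\<dots> = (\<Sum>t\<in>{1..\<tau>}. \<integral>w. wt dens t w * \<phi> t w \<partial>law M ?K (2 * t))"
      using T1 by (intro sum.cong) auto
    finally show ?thesis .
  qed

  define \<beta> where "\<beta> u = (\<integral>w. ?V (2 * u + 1) w \<partial>law M ?G (2 * u + 1))" for u
  have T2: "\<And>t. t \<in> {1..\<tau>} \<Longrightarrow> (\<integral>w. wt dens t w * \<phi> t w \<partial>law M ?Kh (2 * t)) = \<beta> t - \<beta> (t - 1)"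
  proof -
    fix t assume t: "t \<in> {1..\<tau>}"
    have tt: "t \<le> \<tau>" using t by simp
    obtain u where tu: "t = Suc u" using t by (cases t) auto
    have u: "u < \<tau>" using tu tt by simp
    have sKh: "sets (law M ?Kh (2 * t)) = sets (PiM {..<2 * t} M)" using law_props(2)[OF vKhn[of "2 * t"]] tt by simp
    have spKh: "space (law M ?Kh (2 * t)) = space (PiM {..<2 * t} M)" using law_props(3)[OF vKhn[of "2 * t"]] tt by simp
    have sG: "sets (law M ?G (2 * t)) = sets (PiM {..<2 * t} M)" using law_props(2)[OF vGn[of "2 * t"]] tt by simp
    have spG: "space (law M ?G (2 * t)) = space (PiM {..<2 * t} M)" using law_props(3)[OF vGn[of "2 * t"]] tt by simp
    have pG: "prob_space (law M ?G (2 * t))" using law_props(1)[OF vGn[of "2 * t"]] tt by simp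
    have cm: "law M ?G (2 * t) = density (law M ?Kh (2 * t)) (\<lambda>w. ennreal (wt dens t w))"
      using CM[OF vKh vG dens_meas dens_nonneg g_density, of "2 * t"] tt by simp
    have "(\<integral>w. wt dens t w * \<phi> t w \<partial>law M ?Kh (2 * t)) = (\<integral>w. \<phi> t w \<partial>law M ?G (2 * t))"
      unfolding cm
    proof (subst integral_density)
      show "\<phi> t \<in> borel_measurable (law M ?Kh (2 * t))" using \<phi>m[OF tt] by (simp add: measurable_cong_sets[OF sKh refl])
      show "wt dens t \<in> borel_measurable (law M ?Kh (2 * t))" using dmeas[OF tt] by (simp add: measurable_cong_sets[OF sKh refl])
      show "AE x in law M ?Kh (2 * t). 0 \<le> wt dens t x" by (rule AE_I2) (use dnn[OF tt] spKh in auto)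
    qed simp
    also have "\<dots> = (\<integral>h. \<integral>x. ?V (2 * t + 1) (h(2 * t := x)) \<partial>E t h \<partial>law M ?G (2 * t)) - (\<integral>h. ?V (2 * t) h \<partial>law M ?G (2 * t))"
      unfolding \<phi>_def
    proof (rule Bochner_Integration.integral_diff)
      show "integrable (law M ?G (2 * t)) (\<lambda>h. \<integral>x. ?V (2 * t + 1) (h(2 * t := x)) \<partial>E t h)"
        by (rule int_bound(1)[OF pG]) (use inner_m[OF tt] inner_b[OF tt] spG in \<open>auto simp: measurable_cong_sets[OF sG refl]\<close>)
      show "integrable (law M ?G (2 * t)) (?V (2 * t))"
        by (rule int_bound(1)[OF pG]) (use VP[of "2 * t"] VB[of "2 * t"] tt spG in \<open>auto simp: measurable_cong_sets[OF sG refl]\<close>)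
    qed
    also have "(\<integral>h. \<integral>x. ?V (2 * t + 1) (h(2 * t := x)) \<partial>E t h \<partial>law M ?G (2 * t)) = \<beta> t"
    proof -
      have "(\<integral>w. ?V (Suc (2 * t)) w \<partial>bind (law M ?G (2 * t)) (kst M (2 * t) (?G (2 * t))))
          = (\<integral>h. \<integral>x. ?V (Suc (2 * t)) (h(2 * t := x)) \<partial>?G (2 * t) h \<partial>law M ?G (2 * t))"
        by (rule int_step[OF sG _ _ VPs[OF tt] VBs[OF tt]]) (use pG Et[OF tt] in \<open>auto simp: prob_space_def il_even\<close>)
      then show ?thesis unfolding \<beta>_def law_Suc'[symmetric] by (simp add: il_even)
    qed
    also have "(\<integral>h. ?V (2 * t) h \<partial>law M ?G (2 * t)) = \<beta> (t - 1)"
    proof -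
      have tu2: "2 * t = Suc (2 * u + 1)" using tu by simp
      have sG': "sets (law M ?G (2 * u + 1)) = sets (PiM {..<2 * u + 1} M)" using law_props(2)[OF vGn[of "2 * u + 1"]] u by simp
      have spG': "space (law M ?G (2 * u + 1)) = space (PiM {..<2 * u + 1} M)" using law_props(3)[OF vGn[of "2 * u + 1"]] u by simp
      have pG': "prob_space (law M ?G (2 * u + 1))" using law_props(1)[OF vGn[of "2 * u + 1"]] u by simp
      have VPu: "?V (Suc (2 * u + 1)) \<in> borel_measurable (PiM {..<Suc (2 * u + 1)} M)"
        using VP[of "Suc (2 * u + 1)"] u by simp
      have VBu: "\<And>h. h \<in> space (PiM {..<Suc (2 * u + 1)} M) \<Longrightarrow> \<bar>?V (Suc (2 * u + 1)) h\<bar> \<le> B"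
        using VB[of "Suc (2 * u + 1)"] u by simp
      have gu: "g u \<in> measurable (PiM {..<2 * u + 1} M) (prob_algebra (M (2 * u + 1)))" by (rule g_meas[OF u])
      have "(\<integral>w. ?V (Suc (2 * u + 1)) w \<partial>bind (law M ?G (2 * u + 1)) (kst M (2 * u + 1) (?G (2 * u + 1))))
          = (\<integral>h. \<integral>x. ?V (Suc (2 * u + 1)) (h(2 * u + 1 := x)) \<partial>?G (2 * u + 1) h \<partial>law M ?G (2 * u + 1))"
        by (rule int_step[OF sG' _ _ VPu VBu]) (use pG' gu in \<open>auto simp: prob_space_def il_odd\<close>)
      also have "\<dots> = (\<integral>h. ?V (2 * u + 1) h \<partial>law M ?G (2 * u + 1))"
      proof (rule Bochner_Integration.integral_cong[OF refl])
        fix h assume "h \<in> space (law M ?G (2 * u + 1))"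
        then have h: "h \<in> space (PiM {..<2 * u + 1} M)" using spG' by simp
        have "?V (2 * u + 1) h = (\<integral>x. ?V (Suc (2 * u + 1)) (h(2 * u + 1 := x)) \<partial>?F (2 * u + 1) h)"
          by (rule val_unfold) (use u h in auto)
        then show "(\<integral>x. ?V (Suc (2 * u + 1)) (h(2 * u + 1 := x)) \<partial>?G (2 * u + 1) h) = ?V (2 * u + 1) h"
          by (simp add: il_odd)
      qed
      finally show ?thesis unfolding \<beta>_def law_Suc'[symmetric] tu2[symmetric] using tu by simp
    qed
    finally show "(\<integral>w. wt dens t w * \<phi> t w \<partial>law M ?Kh (2 * t)) = \<beta> t - \<beta> (t - 1)" .
  qed
  have sumT2: "(\<Sum>t\<in>{1..\<tau>}. \<integral>w. wt dens t w * \<phi> t w \<partial>law M ?Kh (2 * t)) = \<beta> \<tau> - \<beta> 0"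
  proof -
    have "(\<Sum>t\<in>{1..\<tau>}. \<integral>w. wt dens t w * \<phi> t w \<partial>law M ?Kh (2 * t)) = (\<Sum>t=1..\<tau>. \<beta> (Suc t - 1) - \<beta> (t - 1))"
      using T2 by (intro sum.cong) auto
    also have "\<dots> = \<beta> (Suc \<tau> - 1) - \<beta> (1 - 1)"
      by (rule sum_Suc_diff[where f = "\<lambda>t. \<beta> (t - 1)"]) simp
    finally show ?thesis by simp
  qed
  have beta_tau: "\<beta> \<tau> = psi E g Y \<tau>"
  proof -
    have e: "?V ?N = val ?G Y ?N ?N" by (rule ext) (simp add: val_def)
    have "\<beta> \<tau> = (\<integral>w. val ?G Y ?N ?N w \<partial>law M ?G ?N)" unfolding \<beta>_def e by simp
    also have "\<dots> = val ?G Y ?N 0 (\<lambda>_. undefined)" by (rule tower[OF vG N0 Ym YB' order_refl])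
    finally show ?thesis by (simp add: psi_def)
  qed
  have beta_0: "\<beta> 0 = (\<integral>w. ?V 1 w \<partial>law M ?K 1)"
  proof -
    have "law M ?G 1 = law M ?K 1" by (rule law_cong) (simp add: interleave_def)
    then show ?thesis unfolding \<beta>_def by simp
  qed
  show ?thesis
    using PA sumT2 beta_tau beta_0 unfolding \<phi>_def by (simp add: sum_subtractf)
qed

end
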